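(* Let $S$ be a nonabelian finite simple group, $I$ an infinite set, and $G=S^I$ with the product topology. Then $G$ is not strongly complete, and every normal subgroup $U$ of finite index in $G$ is either open in $G$ or not of profinite type (as an abstract group).
   Context: An abstract group is of profinite type if it admits a topology making it a profinite group. A profinite group is strongly complete if every subgroup of finite index is open. *)

theory Defs
  imports "HOL-Analysis.Analysis" "HOL-Algebra.Product_Groups" "HOL-Algebra.SimpleGroups"
begin

definition profinite_group :: "('a, 'b) monoid_scheme \<Rightarrow> 'a topology \<Rightarrow> bool" where
  "profinite_group G T \<longleftrightarrow>
     group G \<and> topspace T = carrier G \<and>
     continuous_map (prod_topology T T) T (\<lambda>(x, y). x \<otimes>\<^bsub>G\<^esub> y) \<and>
     continuous_map T T (\<lambda>x. inv\<^bsub>G\<^esub> x) \<and>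
     compact_space T \<and> Hausdorff_space T \<and>
     (\<forall>x\<in>topspace T. connected_component_of_set T x = {x})"

definition profinite_type :: "('a, 'b) monoid_scheme \<Rightarrow> bool" where
  "profinite_type G \<longleftrightarrow> (\<exists>T. profinite_group G T)"

definition strongly_complete :: "('a, 'b) monoid_scheme \<Rightarrow> 'a topology \<Rightarrow> bool" where
  "strongly_complete G T \<longleftrightarrow>
     (\<forall>H. subgroup H G \<and> finite (rcosets\<^bsub>G\<^esub> H) \<longrightarrow> openin T H)"

end

theory Submission
  imports Defs
begin


lemma centerless:
  fixes S (structure)
  assumes simp: "simple_group S" and nc: "\<not> comm_group S" and z: "z \<in> carrier S"
    and c: "\<forall>s\<in>carrier S. s \<otimes> z = z \<otimes> s"
  shows "z = \<one>"
proof -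
  interpret simple_group S by (fact simp)
  define Z where "Z = {z\<in>carrier S. \<forall>s\<in>carrier S. s \<otimes> z = z \<otimes> s}"
  have ZI: "w \<in> Z" if "w \<in> carrier S" "\<And>s. s \<in> carrier S \<Longrightarrow> s \<otimes> w = w \<otimes> s" for w
    unfolding Z_def using that by blast
  have ZD: "w \<in> carrier S" "s \<otimes> w = w \<otimes> s" if "w \<in> Z" "s \<in> carrier S" for w s
    using that unfolding Z_def by blast+
  have sg: "subgroup Z S"
  proof (rule subgroupI)
    show "Z \<subseteq> carrier S" using ZD(1) by blast
    show "Z \<noteq> {}" using ZI[OF one_closed] by (metis empty_iff l_one r_one)
    show "inv a \<in> Z" if "a \<in> Z" for a
    proof (rule ZI)
      have a: "a \<in> carrier S" using ZD(1)[OF that one_closed] .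
      show "inv a \<in> carrier S" using a by (rule inv_closed)
      fix s assume s: "s \<in> carrier S"
      have sa: "s \<otimes> a = a \<otimes> s" using ZD(2)[OF that s] .
      have "inv a \<otimes> s = inv a \<otimes> ((s \<otimes> a) \<otimes> inv a)" using a s by (simp add: m_assoc)
      also have "\<dots> = inv a \<otimes> ((a \<otimes> s) \<otimes> inv a)" by (simp only: sa)
      also have "\<dots> = s \<otimes> inv a" using a s by (simp add: m_assoc[symmetric])
      finally show "s \<otimes> inv a = inv a \<otimes> s" by simp
    qed
    show "a \<otimes> b \<in> Z" if ab: "a \<in> Z" "b \<in> Z" for a b
    proof (rule ZI)
      have a: "a \<in> carrier S" and b: "b \<in> carrier S" using ZD(1)[OF ab(1) one_closed] ZD(1)[OF ab(2) one_closed] .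
      show "a \<otimes> b \<in> carrier S" using a b by (rule m_closed)
      fix s assume s: "s \<in> carrier S"
      have sa: "s \<otimes> a = a \<otimes> s" using ZD(2)[OF ab(1) s] .
      have sb: "s \<otimes> b = b \<otimes> s" using ZD(2)[OF ab(2) s] .
      have "s \<otimes> (a \<otimes> b) = (s \<otimes> a) \<otimes> b" using a b s by (simp add: m_assoc)
      also have "\<dots> = (a \<otimes> s) \<otimes> b" by (simp only: sa)
      also have "\<dots> = a \<otimes> (s \<otimes> b)" using a b s by (simp add: m_assoc)
      also have "\<dots> = a \<otimes> (b \<otimes> s)" by (simp only: sb)
      also have "\<dots> = (a \<otimes> b) \<otimes> s" using a b s by (simp add: m_assoc)
      finally show "s \<otimes> (a \<otimes> b) = (a \<otimes> b) \<otimes> s" .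
    qed
  qed
  have "Z \<lhd> S"
    unfolding normal_inv_iff
  proof (intro conjI sg ballI)
    fix x h assume x: "x \<in> carrier S" and h: "h \<in> Z"
    have hc: "h \<in> carrier S" using ZD(1)[OF h x] .
    have xh: "x \<otimes> h = h \<otimes> x" using ZD(2)[OF h x] .
    have "x \<otimes> h \<otimes> inv x = h \<otimes> x \<otimes> inv x" by (simp only: xh)
    also have "\<dots> = h" using x hc by (simp add: m_assoc)
    finally show "x \<otimes> h \<otimes> inv x \<in> Z" using h by simp
  qed
  then have "Z = carrier S \<or> Z = {\<one>}" by (rule no_real_normal_subgroup)
  moreover have "Z \<noteq> carrier S"
  proof
    assume Zc: "Z = carrier S"
    have "comm_group S"
    proof (rule group_comm_groupI)
      fix x y assume x: "x \<in> carrier S" and y: "y \<in> carrier S"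
      have "y \<in> Z" using y Zc by simp
      from ZD(2)[OF this x] show "x \<otimes> y = y \<otimes> x" .
    qed
    with nc show False by simp
  qed
  ultimately have "Z = {\<one>}" by simp
  moreover have "z \<in> Z" using z c by (intro ZI) auto
  ultimately show ?thesis by simp
qed



lemma prod_facts:
  fixes S (structure) and I :: "'i set" and U
  assumes grp: "group S" and nU: "U \<lhd> product_group I (\<lambda>_. S)"
  shows "U \<subseteq> (\<Pi>\<^sub>E i\<in>I. carrier S)"
    and "\<And>x y. x \<in> U \<Longrightarrow> y \<in> U \<Longrightarrow> (\<lambda>i\<in>I. x i \<otimes> y i) \<in> U"
    and "(\<lambda>i\<in>I. \<one>) \<in> U"
    and "\<And>x. x \<in> U \<Longrightarrow> (\<lambda>i\<in>I. inv (x i)) \<in> U"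
    and "\<And>g u. g \<in> (\<Pi>\<^sub>E i\<in>I. carrier S) \<Longrightarrow> u \<in> U \<Longrightarrow> (\<lambda>i\<in>I. g i \<otimes> u i \<otimes> inv (g i)) \<in> U"
proof -
  interpret S: group S by (fact grp)
  have gG: "group (product_group I (\<lambda>_. S))" by (simp add: grp)
  have sg: "subgroup U (product_group I (\<lambda>_. S))" using nU by (simp add: normal_def)
  show sub: "U \<subseteq> (\<Pi>\<^sub>E i\<in>I. carrier S)" using subgroup.subset[OF sg] by simp
  show "(\<lambda>i\<in>I. x i \<otimes> y i) \<in> U" if "x \<in> U" "y \<in> U" for x y
    using subgroup.m_closed[OF sg that] by simp
  show "(\<lambda>i\<in>I. \<one>) \<in> U" using subgroup.one_closed[OF sg] by simp
  show "(\<lambda>i\<in>I. inv (x i)) \<in> U" if "x \<in> U" for x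
    using subgroup.m_inv_closed[OF sg that] sub that grp by (subst (asm) inv_product_group) auto
  show "(\<lambda>i\<in>I. g i \<otimes> u i \<otimes> inv (g i)) \<in> U" if g: "g \<in> (\<Pi>\<^sub>E i\<in>I. carrier S)" and u: "u \<in> U" for g u
  proof -
    have "g \<otimes>\<^bsub>product_group I (\<lambda>_. S)\<^esub> u \<otimes>\<^bsub>product_group I (\<lambda>_. S)\<^esub> inv\<^bsub>product_group I (\<lambda>_. S)\<^esub> g \<in> U"
      using nU g u unfolding group.normal_inv_iff[OF gG] by auto
    moreover have "inv\<^bsub>product_group I (\<lambda>_. S)\<^esub> g = (\<lambda>i\<in>I. inv (g i))"
      using g grp by (subst inv_product_group) auto
    ultimately show ?thesis by (simp add: restrict_def cong: if_cong)
  qed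
qed



definition delta :: "'i set \<Rightarrow> ('a,'b) monoid_scheme \<Rightarrow> 'i \<Rightarrow> 'a \<Rightarrow> 'i \<Rightarrow> 'a" where
  "delta I S i s = (\<lambda>k\<in>I. if k = i then s else \<one>\<^bsub>S\<^esub>)"

lemma comm_from_commutator:
  fixes S (structure)
  assumes "group S" "s \<in> carrier S" "u \<in> carrier S" "s \<otimes> u \<otimes> inv s \<otimes> inv u = \<one>"
  shows "s \<otimes> u = u \<otimes> s"
proof -
  interpret group S by fact
  have "s \<otimes> u \<otimes> inv s = u" using assms
    by (metis inv_closed m_closed inv_equality inv_inv)
  then have "s \<otimes> u \<otimes> inv s \<otimes> s = u \<otimes> s" by simp
  then show ?thesis using assms by (simp add: m_assoc)
qed

lemma claimC:
  fixes S (structure) and I :: "'i set" and U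
  assumes simp: "simple_group S" and nc: "\<not> comm_group S"
    and nU: "U \<lhd> product_group I (\<lambda>_. S)"
    and j: "j \<in> I" and notK: "\<not> (\<forall>s\<in>carrier S. delta I S j s \<in> U)"
    and u: "u \<in> U"
  shows "u j = \<one>"
proof -
  interpret simple_group S by fact
  note F = prod_facts[OF is_group nU]
  define N where "N = {s\<in>carrier S. delta I S j s \<in> U}"
  have d1: "delta I S j \<one> = (\<lambda>i\<in>I. \<one>)" by (auto simp: delta_def)
  have dcar: "delta I S j s \<in> (\<Pi>\<^sub>E i\<in>I. carrier S)" if "s \<in> carrier S" for s
    using that by (auto simp: delta_def)
  have sgN: "subgroup N S"
  proof (rule subgroupI)
    show "N \<subseteq> carrier S" by (auto simp: N_def)
    show "N \<noteq> {}" using F(3) d1 unfolding N_def by (metis (mono_tags, lifting) empty_iff mem_Collect_eq one_closed)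
    show "inv a \<in> N" if "a \<in> N" for a
    proof -
      have "delta I S j (inv a) = (\<lambda>i\<in>I. inv (delta I S j a i))"
        by (auto simp: delta_def)
      then show ?thesis using that F(4) unfolding N_def by auto
    qed
    show "a \<otimes> b \<in> N" if "a \<in> N" "b \<in> N" for a b
    proof -
      have "delta I S j (a \<otimes> b) = (\<lambda>i\<in>I. delta I S j a i \<otimes> delta I S j b i)"
        using that by (auto simp: delta_def N_def)
      then show ?thesis using that F(2) unfolding N_def by auto
    qed
  qed
  have "N \<lhd> S"
    unfolding normal_inv_iff
  proof (intro conjI sgN ballI)
    fix x h assume x: "x \<in> carrier S" and h: "h \<in> N"
    have "delta I S j (x \<otimes> h \<otimes> inv x) = (\<lambda>i\<in>I. delta I S j x i \<otimes> delta I S j h i \<otimes> inv (delta I S j x i))"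
      using x h by (auto simp: delta_def N_def)
    then show "x \<otimes> h \<otimes> inv x \<in> N" using F(5)[OF dcar[OF x]] h x unfolding N_def by auto
  qed
  then have "N = carrier S \<or> N = {\<one>}" by (rule no_real_normal_subgroup)
  moreover have "N \<noteq> carrier S" using notK unfolding N_def by auto
  ultimately have N1: "N = {\<one>}" by simp
  have uj: "u j \<in> carrier S" using F(1) u j by auto
  have "s \<otimes> u j = u j \<otimes> s" if s: "s \<in> carrier S" for s
  proof -
    have "(\<lambda>i\<in>I. delta I S j s i \<otimes> u i \<otimes> inv (delta I S j s i)) \<in> U" using F(5)[OF dcar[OF s] u] .
    from F(2)[OF this F(4)[OF u]]
    have "(\<lambda>i\<in>I. (\<lambda>i\<in>I. delta I S j s i \<otimes> u i \<otimes> inv (delta I S j s i)) i \<otimes> (\<lambda>i\<in>I. inv (u i)) i) \<in> U" .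
    moreover have "(\<lambda>i\<in>I. (\<lambda>i\<in>I. delta I S j s i \<otimes> u i \<otimes> inv (delta I S j s i)) i \<otimes> (\<lambda>i\<in>I. inv (u i)) i)
        = delta I S j (s \<otimes> u j \<otimes> inv s \<otimes> inv (u j))"
    proof
      fix k show "(\<lambda>i\<in>I. (\<lambda>i\<in>I. delta I S j s i \<otimes> u i \<otimes> inv (delta I S j s i)) i \<otimes> (\<lambda>i\<in>I. inv (u i)) i) k
        = delta I S j (s \<otimes> u j \<otimes> inv s \<otimes> inv (u j)) k"
        using F(1) u s j by (cases "k \<in> I") (auto simp: delta_def PiE_iff m_assoc)
    qed
    ultimately have "s \<otimes> u j \<otimes> inv s \<otimes> inv (u j) \<in> N" using s uj unfolding N_def by auto
    then have "s \<otimes> u j \<otimes> inv s \<otimes> inv (u j) = \<one>" using N1 by auto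
    then show ?thesis by (rule comm_from_commutator[OF is_group s uj])
  qed
  then have "\<forall>s\<in>carrier S. s \<otimes> u j = u j \<otimes> s" by blast
  then show ?thesis by (rule centerless[OF simp nc uj])
qed



lemma claimD:
  fixes S (structure) and I :: "'i set" and U J
  assumes simp: "simple_group S"
    and nU: "U \<lhd> product_group I (\<lambda>_. S)"
    and fin: "finite (rcosets\<^bsub>product_group I (\<lambda>_. S)\<^esub> U)"
    and JI: "J \<subseteq> I" and triv: "\<forall>u\<in>U. \<forall>j\<in>J. u j = \<one>"
  shows "finite J"
proof -
  interpret simple_group S by fact
  have gG: "group (product_group I (\<lambda>_. S))" by simp
  have sg: "subgroup U (product_group I (\<lambda>_. S))" using nU by (simp add: normal_def)
  note F = prod_facts[OF is_group nU]
  obtain s0 where s0: "s0 \<in> carrier S" "s0 \<noteq> \<one>" using simple_not_triv one_closed by blast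
  define e where "e A = (\<lambda>i\<in>I. if i \<in> A then s0 else \<one>)" for A
  have ecar: "e A \<in> carrier (product_group I (\<lambda>_. S))" for A using s0 by (auto simp: e_def)
  have inj: "inj_on (\<lambda>A. U #>\<^bsub>product_group I (\<lambda>_. S)\<^esub> e A) (Pow J)"
  proof (rule inj_onI)
    fix A B assume A: "A \<in> Pow J" and B: "B \<in> Pow J"
      and eq: "U #>\<^bsub>product_group I (\<lambda>_. S)\<^esub> e A = U #>\<^bsub>product_group I (\<lambda>_. S)\<^esub> e B"
    have "e A \<in> U #>\<^bsub>product_group I (\<lambda>_. S)\<^esub> e B"
      using group.rcos_self[OF gG ecar[of A] sg] eq by metis
    then obtain u where u: "u \<in> U" and euq: "e A = u \<otimes>\<^bsub>product_group I (\<lambda>_. S)\<^esub> e B"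
      unfolding r_coset_def by auto
    have "e A j = e B j" if "j \<in> J" for j
    proof -
      have jI: "j \<in> I" using that JI by auto
      have "e A j = u j \<otimes> e B j" using arg_cong[OF euq, of "\<lambda>f. f j"] jI by (simp add: e_def)
      also have "\<dots> = e B j"
      proof -
        have "u j = \<one>" using triv u that by blast
        then show ?thesis using s0 jI by (simp add: e_def)
      qed
      finally show ?thesis .
    qed
    then show "A = B" using A B JI s0 unfolding e_def by (auto split: if_splits) (metis subsetD)+
  qed
  have "(\<lambda>A. U #>\<^bsub>product_group I (\<lambda>_. S)\<^esub> e A) ` Pow J \<subseteq> rcosets\<^bsub>product_group I (\<lambda>_. S)\<^esub> U"
    using ecar F(1) by (auto intro!: group.rcosetsI[OF gG])
  then have "finite (Pow J)" using inj fin finite_imageD finite_subset by metis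
  then show ?thesis by simp
qed



lemma EU_lemma:
  fixes S (structure) and I :: "'i set" and U J E
  assumes closedU: "closedin (product_topology (\<lambda>_. discrete_topology (carrier S)) I) U"
  and E_def: "E = (\<Pi>\<^sub>E i\<in>I. if i \<in> J then {\<one>} else carrier S)"
  and finsupp: "\<And>h A. h \<in> E \<Longrightarrow> finite A \<Longrightarrow> (\<lambda>i\<in>I. if i \<in> A then h i else \<one>) \<in> U"
  and sg: "simple_group S"
  shows "E \<subseteq> U"
proof -
  interpret simple_group S by fact
  show "E \<subseteq> U"
  proof
    fix h assume hE: "h \<in> E"
    show "h \<in> U"
    proof (rule ccontr)
      assume hU: "h \<notin> U"
      have op: "openin (product_topology (\<lambda>_. discrete_topology (carrier S)) I)
          (topspace (product_topology (\<lambda>_. discrete_topology (carrier S)) I) - U)"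
        using closedU by (simp add: closedin_def)
      have hT: "h \<in> topspace (product_topology (\<lambda>_. discrete_topology (carrier S)) I) - U"
        using hE hU by (auto simp: E_def PiE_iff split: if_splits)
      obtain V where V0: "finite {i \<in> I. V i \<noteq> topspace (discrete_topology (carrier S))}" "\<forall>i\<in>I. openin (discrete_topology (carrier S)) (V i)"
        "h \<in> Pi\<^sub>E I V" "Pi\<^sub>E I V \<subseteq> topspace (product_topology (\<lambda>_. discrete_topology (carrier S)) I) - U"
        using bspec[OF op[unfolded openin_product_topology_alt] hT] by blast
      have V: "finite {i \<in> I. V i \<noteq> carrier S}" "h \<in> Pi\<^sub>E I V"
        "Pi\<^sub>E I V \<subseteq> topspace (product_topology (\<lambda>_. discrete_topology (carrier S)) I) - U"
        using V0 by (simp_all only: topspace_discrete_topology)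
      define h' where "h' = (\<lambda>i\<in>I. if i \<in> {i \<in> I. V i \<noteq> carrier S} then h i else \<one>)"
      have "h' \<in> U" unfolding h'_def by (rule finsupp[OF hE V(1)])
      moreover have "h' \<in> Pi\<^sub>E I V" using V(2) one_closed by (auto simp: h'_def PiE_iff)
      ultimately show False using V(3) by blast
    qed
  qed
qed

lemma part2:
  fixes S (structure) and I :: "'i set" and U T
  assumes simp: "simple_group S" and finS: "finite (carrier S)" and nc: "\<not> comm_group S"
    and nU: "U \<lhd> product_group I (\<lambda>_. S)"
    and fin: "finite (rcosets\<^bsub>product_group I (\<lambda>_. S)\<^esub> U)"
    and pf: "profinite_group ((product_group I (\<lambda>_. S))\<lparr>carrier := U\<rparr>) T"
  shows "openin (product_topology (\<lambda>_. discrete_topology (carrier S)) I) U"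
proof -
  interpret simple_group S by fact
  note F = prod_facts[OF is_group nU]
  have tT: "topspace T = U" using pf by (simp add: profinite_group_def)
  have mc: "continuous_map (prod_topology T T) T (\<lambda>(x,y). \<lambda>i\<in>I. x i \<otimes> y i)"
    using pf by (simp add: profinite_group_def)
  have cT: "compact_space T" and hT: "Hausdorff_space T" using pf by (simp_all add: profinite_group_def)
  define K where "K = {i\<in>I. \<forall>s\<in>carrier S. delta I S i s \<in> U}"
  define J where "J = I - K"
  have C: "u j = \<one>" if "u \<in> U" "j \<in> J" for u j
    using that claimC[OF simp nc nU _ _ that(1), of j] unfolding J_def K_def by auto
  have finJ: "finite J"
    using claimD[OF simp nU fin, of J] C unfolding J_def by auto
  have rm: "continuous_map T T (\<lambda>u. \<lambda>i\<in>I. u i \<otimes> a i)" if a: "a \<in> U" for a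
  proof -
    have "continuous_map T (prod_topology T T) (\<lambda>u. (u, a))"
      using a tT by (intro continuous_map_pairedI) (auto simp: continuous_map_id[unfolded id_def])
    from continuous_map_compose[OF this mc] show ?thesis by (simp add: o_def)
  qed
  have lm: "continuous_map T T (\<lambda>u. \<lambda>i\<in>I. a i \<otimes> u i)" if a: "a \<in> U" for a
  proof -
    have "continuous_map T (prod_topology T T) (\<lambda>u. (a, u))"
      using a tT by (intro continuous_map_pairedI) (auto simp: continuous_map_id[unfolded id_def])
    from continuous_map_compose[OF this mc] show ?thesis by (simp add: o_def)
  qed
  have Ucar: "u \<in> U \<Longrightarrow> k \<in> I \<Longrightarrow> u k \<in> carrier S" for u k using F(1) by auto
  have fib: "closedin T {u\<in>U. u i = t}" if i: "i \<in> K" and t: "t \<in> carrier S" for i t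
  proof -
    have iI: "i \<in> I" using i by (simp add: K_def)
    define d where "d = delta I S i (inv t)"
    have dU: "d \<in> U" using i t by (simp add: K_def d_def)
    have aU: "delta I S i s \<in> U" if "s \<in> carrier S" for s using i that by (simp add: K_def)
    define Fs where "Fs s = (\<lambda>u. \<lambda>k\<in>I. (\<lambda>k\<in>I. u k \<otimes> d k) k \<otimes> delta I S i s k)" for s
    define Gs where "Gs s = (\<lambda>u. \<lambda>k\<in>I. delta I S i s k \<otimes> (\<lambda>k\<in>I. u k \<otimes> d k) k)" for s
    have cF: "continuous_map T T (Fs s)" if "s \<in> carrier S" for s
      using continuous_map_compose[OF rm[OF dU] rm[OF aU[OF that]]] by (simp add: o_def Fs_def)
    have cG: "continuous_map T T (Gs s)" if "s \<in> carrier S" for s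
      using continuous_map_compose[OF rm[OF dU] lm[OF aU[OF that]]] by (simp add: o_def Gs_def)
    have eq: "{u\<in>U. u i = t} = \<Inter> ((\<lambda>s. {u \<in> topspace T. Fs s u = Gs s u}) ` carrier S)"
    proof (intro equalityI subsetI)
      fix u assume "u \<in> {u\<in>U. u i = t}"
      then have u: "u \<in> U" "u i = t" by auto
      have "Fs s u = Gs s u" if s: "s \<in> carrier S" for s
      proof
        fix k show "Fs s u k = Gs s u k"
          using Ucar[OF u(1)] u t s iI
          by (cases "k \<in> I"; cases "k = i") (auto simp: Fs_def Gs_def d_def delta_def)
      qed
      then show "u \<in> \<Inter> ((\<lambda>s. {u \<in> topspace T. Fs s u = Gs s u}) ` carrier S)"
        using u tT by auto
    next
      fix u assume "u \<in> \<Inter> ((\<lambda>s. {u \<in> topspace T. Fs s u = Gs s u}) ` carrier S)"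
      then have u: "u \<in> U" and e: "\<And>s. s \<in> carrier S \<Longrightarrow> Fs s u = Gs s u" using tT one_closed by auto
      have ui: "u i \<in> carrier S" using Ucar[OF u iI] .
      have "s \<otimes> (u i \<otimes> inv t) = (u i \<otimes> inv t) \<otimes> s" if s: "s \<in> carrier S" for s
        using arg_cong[OF e[OF s], of "\<lambda>f. f i"] iI by (simp add: Fs_def Gs_def d_def delta_def)
      then have "\<forall>s\<in>carrier S. s \<otimes> (u i \<otimes> inv t) = (u i \<otimes> inv t) \<otimes> s" by blast
      then have "u i \<otimes> inv t = \<one>" by (rule centerless[OF simp nc m_closed[OF ui inv_closed[OF t]]])
      then have "u i = t" using ui t by (metis inv_closed inv_equality inv_inv)
      then show "u \<in> {u\<in>U. u i = t}" using u by auto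
    qed
    show ?thesis unfolding eq
      by (rule closedin_Inter) (auto intro!: closedin_continuous_maps_eq[OF hT] cF cG)
  qed
  have cont: "continuous_map T (product_topology (\<lambda>_. discrete_topology (carrier S)) I) (\<lambda>u. u)"
    unfolding continuous_map_componentwise
  proof (intro conjI ballI)
    show "(\<lambda>u. u) ` topspace T \<subseteq> extensional I" using tT F(1) by (simp add: PiE_def)
    fix k assume k: "k \<in> I"
    show "continuous_map T (discrete_topology (carrier S)) (\<lambda>x. x k)"
      unfolding continuous_map_def
    proof (intro conjI allI impI)
      show "(\<lambda>x. x k) \<in> topspace T \<rightarrow> topspace (discrete_topology (carrier S))"
        using Ucar k tT by (simp add: Pi_def)
      fix V assume "openin (discrete_topology (carrier S)) V"
      show "openin T {x \<in> topspace T. x k \<in> V}"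
      proof (cases "k \<in> K")
        case False
        then have kJ: "k \<in> J" using k by (simp add: J_def)
        have "{x \<in> topspace T. x k \<in> V} = (if \<one> \<in> V then topspace T else {})"
          using C[OF _ kJ] tT by (auto simp del: )
        then show ?thesis by simp
      next
        case True
        have "{x \<in> topspace T. x k \<in> V} = topspace T - \<Union> ((\<lambda>t. {u\<in>U. u k = t}) ` (carrier S - V))"
          using tT Ucar[OF _ k] by auto
        moreover have "closedin T (\<Union> ((\<lambda>t. {u\<in>U. u k = t}) ` (carrier S - V)))"
          using finS fib[OF True] by (intro closedin_Union) auto
        ultimately show ?thesis by (simp add: openin_diff)
      qed
    qed
  qed
  have closedU: "closedin (product_topology (\<lambda>_. discrete_topology (carrier S)) I) U"
  proof -
    have H: "Hausdorff_space (product_topology (\<lambda>_. discrete_topology (carrier S)) I)"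
      unfolding Hausdorff_space_product_topology by (intro disjI2 ballI Hausdorff_space_discrete_topology)
    have "compactin (product_topology (\<lambda>_. discrete_topology (carrier S)) I) ((\<lambda>u. u) ` topspace T)"
      using image_compactin[OF cT[unfolded compact_space_def] cont] .
    moreover have "(\<lambda>u. u) ` topspace T = U" using tT by simp
    ultimately have cU: "compactin (product_topology (\<lambda>_. discrete_topology (carrier S)) I) U" by (simp only:)
    show ?thesis by (rule compactin_imp_closedin[OF H cU])
  qed
  define E where "E = (\<Pi>\<^sub>E i\<in>I. if i \<in> J then {\<one>} else carrier S)"
  have UE: "U \<subseteq> E"
  proof
    fix u assume u: "u \<in> U"
    have uP: "u \<in> (\<Pi>\<^sub>E i\<in>I. carrier S)" using F(1) u by blast
    show "u \<in> E" unfolding E_def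
    proof (rule PiE_I)
      fix x assume x: "x \<in> I"
      show "u x \<in> (if x \<in> J then {\<one>} else carrier S)"
      proof (cases "x \<in> J")
        case True then show ?thesis using C[OF u True] by simp
      next
        case False then show ?thesis using Ucar[OF u x] by simp
      qed
    next
      fix x assume "x \<notin> I" then show "u x = undefined" using PiE_arb[OF uP] by blast
    qed
  qed
  have finsupp: "(\<lambda>i\<in>I. if i \<in> A then h i else \<one>) \<in> U" if h: "h \<in> E" and A: "finite A" for h A
    using A
  proof (induction A rule: finite_induct)
    case empty
    then show ?case using F(3) by (simp add: restrict_def)
  next
    case (insert x A)
    have hc: "i \<in> I \<Longrightarrow> h i \<in> carrier S" for i using h by (auto simp: E_def PiE_iff split: if_splits)
    show ?case
    proof (cases "x \<in> K")
      case True
      have xI: "x \<in> I" using True by (simp add: K_def)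
      have dU: "delta I S x (h x) \<in> U" using True hc[OF xI] by (simp add: K_def)
      have eq: "(\<lambda>i\<in>I. if i \<in> insert x A then h i else \<one>)
          = (\<lambda>i\<in>I. delta I S x (h x) i \<otimes> (\<lambda>i\<in>I. if i \<in> A then h i else \<one>) i)"
      proof
        fix k show "(\<lambda>i\<in>I. if i \<in> insert x A then h i else \<one>) k
          = (\<lambda>i\<in>I. delta I S x (h x) i \<otimes> (\<lambda>i\<in>I. if i \<in> A then h i else \<one>) i) k"
          using hc insert.hyps(2) by (cases "k \<in> I"; cases "k = x") (auto simp: delta_def)
      qed
      show ?thesis unfolding eq by (rule F(2)[OF dU insert.IH])
    next
      case False
      have eq: "(\<lambda>i\<in>I. if i \<in> insert x A then h i else \<one>) = (\<lambda>i\<in>I. if i \<in> A then h i else \<one>)"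
      proof
        fix k show "(\<lambda>i\<in>I. if i \<in> insert x A then h i else \<one>) k = (\<lambda>i\<in>I. if i \<in> A then h i else \<one>) k"
          using h False by (cases "k \<in> I"; cases "k = x") (auto simp: E_def J_def PiE_iff)
      qed
      show ?thesis unfolding eq by (rule insert.IH)
    qed
  qed
  have EU: "E \<subseteq> U"
    apply (rule EU_lemma[where J=J])
    apply (rule closedU)
    apply (rule E_def)
    apply (rule finsupp; assumption)
    apply (rule is_simple_group)
    done
  have "U = E" using UE EU by (rule equalityI)
  moreover have "openin (product_topology (\<lambda>_. discrete_topology (carrier S)) I) E"
    unfolding E_def openin_PiE_gen
  proof (rule disjI2, intro conjI ballI)
    have "{i \<in> I. (if i \<in> J then {\<one>} else carrier S) \<noteq> topspace (discrete_topology (carrier S))} \<subseteq> J"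
      by (rule subsetI) (simp split: if_splits)
    then show "finite {i \<in> I. (if i \<in> J then {\<one>} else carrier S) \<noteq> topspace (discrete_topology (carrier S))}"
      using finJ finite_subset by blast
  next
    fix i show "openin (discrete_topology (carrier S)) (if i \<in> J then {\<one>} else carrier S)"
      using one_closed by auto
  qed
  ultimately show ?thesis by (simp only:)
qed



lemma ultra_ex:
  fixes I :: "'i set"
  assumes inf: "infinite I"
  shows "\<exists>F::'i filter. F \<noteq> bot \<and> (\<forall>P. eventually P F \<or> eventually (\<lambda>x. \<not> P x) F)
           \<and> eventually (\<lambda>i. i \<in> I) F \<and> (\<forall>A. finite A \<longrightarrow> eventually (\<lambda>i. i \<notin> A) F)"
proof -
  define F0 where "F0 = inf cofinite (principal I)"
  have F0: "F0 \<noteq> bot"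
    using inf by (simp add: F0_def trivial_limit_def eventually_inf_principal eventually_cofinite)
  let ?R = "{(b, a). a \<noteq> bot \<and> a \<le> b \<and> b \<le> F0}"
  have bot_notin_R: "c \<in> Chains ?R \<Longrightarrow> bot \<notin> c" for c
    by (auto simp: Chains_def)
  have [simp]: "Field ?R = {G. G \<noteq> bot \<and> G \<le> F0}"
    by (auto simp: Field_def bot_unique)
  have "\<exists>m\<in>Field ?R. \<forall>a\<in>Field ?R. (m, a) \<in> ?R \<longrightarrow> a = m"
  proof (rule Zorns_po_lemma)
    show "Partial_order ?R"
      by (auto simp: partial_order_on_def preorder_on_def
          antisym_def refl_on_def trans_def Field_def bot_unique)
    show "\<exists>u\<in>Field ?R. \<forall>a\<in>C. (a, u) \<in> ?R" if C: "C \<in> Chains ?R" for C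
    proof (simp, intro exI conjI ballI)
      have Inf_C: "Inf C \<noteq> bot" "Inf C \<le> F0" if "C \<noteq> {}"
      proof -
        from C that have "Inf C = bot \<longleftrightarrow> (\<exists>x\<in>C. x = bot)"
          unfolding trivial_limit_def by (intro eventually_Inf_base) (auto simp: Chains_def)
        with C show "Inf C \<noteq> bot"
          by (simp add: bot_notin_R)
        from that obtain x where "x \<in> C" by auto
        with C show "Inf C \<le> F0"
          by (auto intro!: Inf_lower2[of x] simp: Chains_def)
      qed
      then have [simp]: "inf F0 (Inf C) = (if C = {} then F0 else Inf C)"
        using C by (auto simp add: inf_absorb2)
      from C show "inf F0 (Inf C) \<noteq> bot"
        by (simp add: F0 Inf_C)
      from C show "inf F0 (Inf C) \<le> F0"
        by (simp add: Chains_def Inf_C F0)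
      with C show "inf F0 (Inf C) \<le> x" "x \<le> F0" if "x \<in> C" for x
        using that  by (auto intro: Inf_lower simp: Chains_def)
    qed
  qed
  then obtain U where U: "U \<noteq> bot" "U \<le> F0" and max: "\<And>G. G \<noteq> bot \<Longrightarrow> G \<le> U \<Longrightarrow> U = G"
    by auto (metis order_trans)
  have ultra: "eventually P U \<or> eventually (\<lambda>x. \<not> P x) U" for P
  proof (rule disjCI)
    assume "\<not> (\<forall>\<^sub>Fx in U. \<not> P x)"
    then have "inf U (principal {x. P x}) \<noteq> bot"
      by (simp add: trivial_limit_def eventually_inf_principal not_eventually)
    then have F: "U = inf U (principal {x. P x})"
      by (rule max) simp
    show "eventually P U"
      by (subst F) (simp add: eventually_inf_principal)
  qed
  have "eventually (\<lambda>i. i \<in> I) F0" by (simp add: F0_def eventually_inf_principal)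
  then have e1: "eventually (\<lambda>i. i \<in> I) U" using U(2) by (rule filter_leD[rotated])
  have e2: "eventually (\<lambda>i. i \<notin> A) U" if "finite A" for A
  proof -
    have "eventually (\<lambda>i. i \<notin> A) F0" using that by (simp add: F0_def eventually_inf_principal eventually_cofinite)
    then show ?thesis using U(2) by (rule filter_leD[rotated])
  qed
  show ?thesis using U(1) ultra e1 e2 by blast
qed



lemma ultra_fin_disj:
  assumes nb: "F \<noteq> bot" and ultra: "\<forall>P. eventually P F \<or> eventually (\<lambda>x. \<not> P x) F"
    and A: "finite A"
  shows "eventually (\<lambda>i. \<exists>s\<in>A. P s i) F \<Longrightarrow> \<exists>s\<in>A. eventually (P s) F"
  using A
proof (induction A rule: finite_induct)
  case empty
  then show ?case using nb by (simp add: trivial_limit_def)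
next
  case (insert x A)
  show ?case
  proof (cases "eventually (P x) F")
    case True then show ?thesis by auto
  next
    case False
    then have "eventually (\<lambda>i. \<not> P x i) F" using ultra by blast
    with insert.prems have "eventually (\<lambda>i. \<exists>s\<in>A. P s i) F"
      by (auto elim: eventually_rev_mp intro: eventually_mono)
    then show ?thesis using insert.IH by auto
  qed
qed

lemma part1:
  fixes S :: "('a, 'b) monoid_scheme" (structure) and I :: "'i set"
  assumes grp: "group S" and finS: "finite (carrier S)" and nt: "carrier S \<noteq> {\<one>}" and inf: "infinite I"
  shows "\<not> strongly_complete (product_group I (\<lambda>_. S))
                (product_topology (\<lambda>_. discrete_topology (carrier S)) I)"
proof
  interpret S: group S by fact
  have gG: "group (product_group I (\<lambda>_. S))" by (simp add: grp)
  obtain F :: "'i filter" where nb: "F \<noteq> bot" and ultra: "\<forall>P. eventually P F \<or> eventually (\<lambda>x. \<not> P x) F"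
    and eI: "eventually (\<lambda>i. i \<in> I) F" and efin: "\<And>A. finite A \<Longrightarrow> eventually (\<lambda>i. i \<notin> A) F"
    using ultra_ex[OF inf] by blast
  define H where "H = {g \<in> carrier (product_group I (\<lambda>_. S)). eventually (\<lambda>i. g i = \<one>) F}"
  have sg: "subgroup H (product_group I (\<lambda>_. S))"
  proof (rule group.subgroupI[OF gG])
    show "H \<subseteq> carrier (product_group I (\<lambda>_. S))" by (auto simp: H_def)
    have "eventually (\<lambda>i. (\<lambda>i\<in>I. \<one>) i = \<one>) F" using eI by (rule eventually_mono) simp
    then have "\<one>\<^bsub>product_group I (\<lambda>_. S)\<^esub> \<in> H"
      by (auto simp: H_def)
    then show "H \<noteq> {}" by auto
    show "inv\<^bsub>product_group I (\<lambda>_. S)\<^esub> a \<in> H" if a: "a \<in> H" for a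
    proof -
      have ac: "a \<in> (\<Pi>\<^sub>E i\<in>I. carrier S)" using a by (simp add: H_def)
      have "inv\<^bsub>product_group I (\<lambda>_. S)\<^esub> a = (\<lambda>i\<in>I. inv (a i))"
        using ac grp by (subst inv_product_group) auto
      moreover have "eventually (\<lambda>i. a i = \<one>) F" using a by (simp add: H_def)
      then have "eventually (\<lambda>i. a i = \<one> \<and> i \<in> I) F" using eI by (rule eventually_conj)
      then have "eventually (\<lambda>i. (\<lambda>i\<in>I. inv (a i)) i = \<one>) F"
        by (rule eventually_mono) simp
      ultimately show ?thesis using ac
        by (auto simp: H_def PiE_iff)
    qed
    show "a \<otimes>\<^bsub>product_group I (\<lambda>_. S)\<^esub> b \<in> H" if "a \<in> H" "b \<in> H" for a b
    proof -
      have "eventually (\<lambda>i. a i = \<one> \<and> b i = \<one> \<and> i \<in> I) F"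
        using that eI by (auto simp: H_def intro: eventually_conj)
      then have "eventually (\<lambda>i. (\<lambda>i\<in>I. a i \<otimes> b i) i = \<one>) F"
        by (rule eventually_mono) simp
      moreover have "a \<otimes>\<^bsub>product_group I (\<lambda>_. S)\<^esub> b \<in> carrier (product_group I (\<lambda>_. S))"
        using that by (intro group.subgroupI gG monoid.m_closed group.is_monoid) (auto simp: H_def)
      ultimately show ?thesis by (simp add: H_def)
    qed
  qed
  define c :: "'a \<Rightarrow> 'i \<Rightarrow> 'a" where "c s = (\<lambda>i\<in>I. s)" for s
  have rc: "H #>\<^bsub>product_group I (\<lambda>_. S)\<^esub> g \<in> (\<lambda>s. H #>\<^bsub>product_group I (\<lambda>_. S)\<^esub> c s) ` carrier S"
    if g: "g \<in> carrier (product_group I (\<lambda>_. S))" for g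
  proof -
    have "eventually (\<lambda>i. \<exists>s\<in>carrier S. g i = s) F"
      using eI g by (auto elim: eventually_mono)
    then obtain s where s: "s \<in> carrier S" "eventually (\<lambda>i. g i = s) F"
      using ultra_fin_disj[OF nb ultra finS, of "\<lambda>s i. g i = s"] by blast
    have cs: "c s \<in> carrier (product_group I (\<lambda>_. S))" using s by (auto simp: c_def)
    define h where "h = (\<lambda>i\<in>I. g i \<otimes> inv s)"
    have hH: "h \<in> H"
    proof -
      have "eventually (\<lambda>i. h i = \<one>) F"
        using eventually_conj[OF s(2) eI] s by (auto simp: h_def elim: eventually_mono)
      then show ?thesis using g s by (auto simp: H_def h_def PiE_iff)
    qed
    have "h \<otimes>\<^bsub>product_group I (\<lambda>_. S)\<^esub> c s = g"
    proof
      fix i show "(h \<otimes>\<^bsub>product_group I (\<lambda>_. S)\<^esub> c s) i = g i"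
        using g s by (cases "i \<in> I") (auto simp: h_def c_def PiE_iff S.m_assoc extensional_def)
    qed
    then have "g \<in> H #>\<^bsub>product_group I (\<lambda>_. S)\<^esub> c s" using hH unfolding r_coset_def by force
    then have "H #>\<^bsub>product_group I (\<lambda>_. S)\<^esub> c s = H #>\<^bsub>product_group I (\<lambda>_. S)\<^esub> g"
      by (rule group.repr_independence[OF gG _ cs sg])
    then show ?thesis using s by force
  qed
  have finH: "finite (rcosets\<^bsub>product_group I (\<lambda>_. S)\<^esub> H)"
  proof (rule finite_subset[OF _ finite_imageI[OF finS]])
    show "rcosets\<^bsub>product_group I (\<lambda>_. S)\<^esub> H \<subseteq> (\<lambda>s. H #>\<^bsub>product_group I (\<lambda>_. S)\<^esub> c s) ` carrier S"
      unfolding RCOSETS_def using rc by blast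
  qed
  assume "strongly_complete (product_group I (\<lambda>_. S)) (product_topology (\<lambda>_. discrete_topology (carrier S)) I)"
  then have op: "openin (product_topology (\<lambda>_. discrete_topology (carrier S)) I) H"
    using sg finH by (simp add: strongly_complete_def)
  have "eventually (\<lambda>i. (\<lambda>i\<in>I. \<one>) i = \<one>) F" using eI by (rule eventually_mono) simp
  then have oneH: "(\<lambda>i\<in>I. \<one>) \<in> H" by (auto simp: H_def)
  obtain V where V0: "finite {i \<in> I. V i \<noteq> topspace (discrete_topology (carrier S))}"
     "\<forall>i\<in>I. openin (discrete_topology (carrier S)) (V i)"
     "(\<lambda>i\<in>I. \<one>) \<in> Pi\<^sub>E I V" "Pi\<^sub>E I V \<subseteq> H"
    using bspec[OF op[unfolded openin_product_topology_alt] oneH] by blast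
  have V: "finite {i \<in> I. V i \<noteq> carrier S}" "(\<lambda>i\<in>I. \<one>) \<in> Pi\<^sub>E I V" "Pi\<^sub>E I V \<subseteq> H"
    using V0 by (simp_all only: topspace_discrete_topology)
  obtain s0 where s0: "s0 \<in> carrier S" "s0 \<noteq> \<one>" using nt S.one_closed by blast
  define g where "g = (\<lambda>i\<in>I. if i \<in> {i \<in> I. V i \<noteq> carrier S} then \<one> else s0)"
  have "g \<in> Pi\<^sub>E I V" using V(2) s0 by (auto simp: g_def PiE_iff)
  then have "g \<in> H" using V(3) by blast
  then have "eventually (\<lambda>i. g i = \<one>) F" by (simp add: H_def)
  moreover have "eventually (\<lambda>i. i \<in> I \<and> i \<notin> {i \<in> I. V i \<noteq> carrier S}) F"
    using eventually_conj[OF eI efin[OF V(1)]] .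
  ultimately have "eventually (\<lambda>i. False) F"
    by eventually_elim (use s0 in \<open>auto simp: g_def\<close>)
  with nb show False by (simp add: trivial_limit_def)
qed


theorem mainTheorem10:
  fixes S :: "('a, 'b) monoid_scheme" and I :: "'i set"
  assumes "simple_group S" and "finite (carrier S)" and "\<not> comm_group S"
    and "infinite I"
  shows "\<not> strongly_complete (product_group I (\<lambda>_. S))
                (product_topology (\<lambda>_. discrete_topology (carrier S)) I)
       \<and> (\<forall>U. U \<lhd> product_group I (\<lambda>_. S) \<and> finite (rcosets\<^bsub>product_group I (\<lambda>_. S)\<^esub> U)
              \<longrightarrow> openin (product_topology (\<lambda>_. discrete_topology (carrier S)) I) U
                  \<or> \<not> profinite_type ((product_group I (\<lambda>_. S))\<lparr>carrier := U\<rparr>))"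
proof (intro conjI allI impI)
  have grp: "group S" using assms(1) by (simp add: simple_group_def)
  have nt: "carrier S \<noteq> {\<one>\<^bsub>S\<^esub>}" using simple_group.simple_not_triv[OF assms(1)] .
  show "\<not> strongly_complete (product_group I (\<lambda>_. S))
                (product_topology (\<lambda>_. discrete_topology (carrier S)) I)"
    by (rule part1[OF grp assms(2) nt assms(4)])
  fix U assume U: "U \<lhd> product_group I (\<lambda>_. S) \<and> finite (rcosets\<^bsub>product_group I (\<lambda>_. S)\<^esub> U)"
  show "openin (product_topology (\<lambda>_. discrete_topology (carrier S)) I) U
                  \<or> \<not> profinite_type ((product_group I (\<lambda>_. S))\<lparr>carrier := U\<rparr>)"
    unfolding profinite_type_def using part2[OF assms(1-3)] U by blast
qed

end
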